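(* Let $q\geq4$ be an even integer, $n=q^2-1$, and let $A_0=I,A_1,A_2,A_3$ be the adjacency matrices of a symmetric 3-class association scheme on $n$ points with first eigenmatrix \[ P=\begin{bmatrix}1&\frac{q^2}{2}-q&\frac{q^2}{2}&q-2\\ 1&\frac q2&-\frac q2&-1\\ 1&-\frac q2+1&-\frac q2&q-2\\ 1&-\frac q2&\frac q2&-1\end{bmatrix}. \] Let $w_3$ be a complex number with $w_3+\frac1{w_3}+q^2-3=0$. (a) If $W=A_0+w_3(A_1+A_2+A_3)$, then $W$ and $W^{(-)}$ are inequivalent. (b) If $W=A_0+w_1A_1+w_1A_2+w_3A_3$ with $w_1=\frac{-(q-3)w_3+(q-1)}{q^2-2q-1}$, then $W$ and $W^{(-)}$ are inequivalent.
   Context: A symmetric association scheme with adjacency matrices $A_0=I,\dots,A_d$: symmetric $(0,1)$-matrices summing to $J$ whose span is closed under multiplication; with primitive idempotents $E_0=\frac1nJ,\dots,E_d$, the first eigenmatrix is defined by $A_j=\sum_iP_{i,j}E_i$. The matrices $W$ in (a) and (b) are type-II matrices, i.e. have nonzero complex entries and satisfy $W(W^{(-)})^\top=nI$, where $W^{(-)}$ is the entrywise inverse of $W$. Two type-II matrices $W_1,W_2$ are equivalent if there exist invertible diagonal matrices $D,D'$ and permutation matrices $T,T'$ with $DW_1D'=TW_2T'$. *)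

theory Defs
  imports "HOL-Combinatorics.Permutations" "HOL-Library.Function_Algebras" Complex_Main
begin

type_synonym 'v cmat = "'v \<Rightarrow> 'v \<Rightarrow> complex"

definition mmult :: "'v::finite cmat \<Rightarrow> 'v cmat \<Rightarrow> 'v cmat" where
  "mmult A B = (\<lambda>x y. \<Sum>z\<in>UNIV. A x z * B z y)"

definition idm :: "'v cmat" where
  "idm = (\<lambda>x y. if x = y then 1 else 0)"

definition Jm :: "'v cmat" where
  "Jm = (\<lambda>x y. 1)"

definition smult_m :: "complex \<Rightarrow> 'v cmat \<Rightarrow> 'v cmat" where
  "smult_m c M = (\<lambda>x y. c * M x y)"

definition transp_m :: "'v cmat \<Rightarrow> 'v cmat" where
  "transp_m M = (\<lambda>x y. M y x)"

definition entry_inv :: "'v cmat \<Rightarrow> 'v cmat" where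
  "entry_inv W = (\<lambda>x y. inverse (W x y))"

definition sym_assoc_scheme :: "nat \<Rightarrow> (nat \<Rightarrow> 'v::finite cmat) \<Rightarrow> bool" where
  "sym_assoc_scheme d A \<longleftrightarrow>
     A 0 = idm \<and>
     (\<forall>i\<le>d. (\<forall>x y. A i x y = 0 \<or> A i x y = 1) \<and> transp_m (A i) = A i \<and> A i \<noteq> 0) \<and>
     (\<Sum>i\<le>d. A i) = Jm \<and>
     (\<forall>i\<le>d. \<forall>j\<le>d. \<exists>c. mmult (A i) (A j) = (\<Sum>k\<le>d. smult_m (c k) (A k)))"

text \<open>P is the first eigenmatrix: there are primitive idempotents E 0 = J/n, E 1, ..., E d
  of the Bose-Mesner algebra (pairwise orthogonal nonzero idempotents of the algebra summing
  to I; since there are d+1 of them in a (d+1)-dimensional algebra they are exactly the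
  primitive idempotents) with A j = sum_i P i j E i.\<close>
definition first_eigenmatrix :: "nat \<Rightarrow> (nat \<Rightarrow> 'v::finite cmat) \<Rightarrow> (nat \<Rightarrow> nat \<Rightarrow> complex) \<Rightarrow> bool" where
  "first_eigenmatrix d A P \<longleftrightarrow>
     (\<exists>E :: nat \<Rightarrow> 'v cmat.
        E 0 = smult_m (1 / of_nat (card (UNIV :: 'v set))) Jm \<and>
        (\<forall>i\<le>d. \<forall>j\<le>d. mmult (E i) (E j) = (if i = j then E i else 0)) \<and>
        (\<forall>i\<le>d. E i \<noteq> 0) \<and>
        (\<Sum>i\<le>d. E i) = idm \<and>
        (\<forall>i\<le>d. \<exists>c. E i = (\<Sum>k\<le>d. smult_m (c k) (A k))) \<and>
        (\<forall>j\<le>d. A j = (\<Sum>i\<le>d. smult_m (P i j) (E i))))"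

definition diagonal_m :: "'v cmat \<Rightarrow> bool" where
  "diagonal_m D \<longleftrightarrow> (\<forall>x y. x \<noteq> y \<longrightarrow> D x y = 0)"

definition invertible_m :: "'v::finite cmat \<Rightarrow> bool" where
  "invertible_m D \<longleftrightarrow> (\<exists>D'. mmult D D' = idm \<and> mmult D' D = idm)"

definition permutation_m :: "'v cmat \<Rightarrow> bool" where
  "permutation_m T \<longleftrightarrow> (\<exists>\<sigma>. \<sigma> permutes UNIV \<and> T = (\<lambda>x y. if \<sigma> x = y then 1 else 0))"

definition typeII_equiv :: "'v::finite cmat \<Rightarrow> 'v cmat \<Rightarrow> bool" where
  "typeII_equiv W1 W2 \<longleftrightarrow>
     (\<exists>D D' T T'. diagonal_m D \<and> invertible_m D \<and> diagonal_m D' \<and> invertible_m D' \<and>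
        permutation_m T \<and> permutation_m T' \<and>
        mmult (mmult D W1) D' = mmult (mmult T W2) T')"

definition P58 :: "nat \<Rightarrow> nat \<Rightarrow> nat \<Rightarrow> complex" where
  "P58 q i j = (let r = of_nat q :: complex in
     [[1, r^2/2 - r, r^2/2, r - 2],
      [1, r/2, -r/2, -1],
      [1, -r/2 + 1, -r/2, r - 2],
      [1, -r/2, r/2, -1]] ! i ! j)"

end

theory Submission
  imports Defs
begin

lemma sum_fun_app: "(sum f I) x = sum (\<lambda>i. f i x) I"
  by (induction I rule: infinite_finite_induct) auto

lemma avoid4:
  fixes A B C D :: "'v::finite set"
  assumes "card A \<le> m" "card B \<le> m" "card C \<le> m" "card D \<le> m"
    "4*m < card (UNIV::'v set)"
  shows "\<exists>y. y \<notin> A \<and> y \<notin> B \<and> y \<notin> C \<and> y \<notin> D"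
proof (rule ccontr)
  assume "\<not> ?thesis"
  hence "UNIV = A \<union> B \<union> C \<union> D" by blast
  hence "card (UNIV::'v set) \<le> card A + card B + card C + card D"
  proof -
    have "card (A \<union> B \<union> C \<union> D) \<le> card (A \<union> B \<union> C) + card D" by (rule card_Un_le)
    moreover have "card (A \<union> B \<union> C) \<le> card (A \<union> B) + card C" by (rule card_Un_le)
    moreover have "card (A \<union> B) \<le> card A + card B" by (rule card_Un_le)
    ultimately show ?thesis by (metis \<open>UNIV = A \<union> B \<union> C \<union> D\<close> add_le_mono1 le_trans)
  qed
  with assms show False by linarith
qed

lemma key:
  fixes W :: "'v::finite cmat" and g :: complex and m :: nat
  assumes rowb: "\<And>x. card {y. W x y \<noteq> g} \<le> m"
  and colb: "\<And>y. card {x. W x y \<noteq> g} \<le> m"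
  and big: "4*m < card (UNIV::'v set)"
  and diag: "\<And>x. W x x = 1" and g0: "g \<noteq> 0"
  and ia: "inj \<alpha>" and ib: "inj \<beta>"
  and eq: "\<And>x y. d x * W x y * e y = inverse (W (\<alpha> x) (\<beta> y))"
  shows "\<exists>u v. W u v = g^2"
proof -
  have c1: "card {y. W (\<alpha> x) (\<beta> y) \<noteq> g} \<le> m" for x
  proof -
    have "card {y. W (\<alpha> x) (\<beta> y) \<noteq> g} \<le> card {v. W (\<alpha> x) v \<noteq> g}"
      by (rule card_inj_on_le[OF inj_on_subset[OF ib]]) auto
    thus ?thesis using rowb[of "\<alpha> x"] by linarith
  qed
  have c2: "card {x. W (\<alpha> x) (\<beta> y) \<noteq> g} \<le> m" for y
  proof -
    have "card {x. W (\<alpha> x) (\<beta> y) \<noteq> g} \<le> card {u. W u (\<beta> y) \<noteq> g}"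
      by (rule card_inj_on_le[OF inj_on_subset[OF ia]]) auto
    thus ?thesis using colb[of "\<beta> y"] by linarith
  qed
  fix x
  obtain y where y: "W x y = g" "W (\<alpha> x) (\<beta> y) = g"
    using avoid4[OF rowb[of x] rowb[of x] c1[of x] c1[of x] big] by blast
  obtain x' where x': "W x' x = g" "W x' y = g" "W (\<alpha> x') (\<beta> x) = g" "W (\<alpha> x') (\<beta> y) = g"
    using avoid4[OF colb[of x] colb[of y] c2[of x] c2[of y] big] by blast
  have e1: "d x * g * e y = inverse g" using eq[of x y] y by simp
  have e2: "d x' * g * e x = inverse g" using eq[of x' x] x' by simp
  have e3: "d x' * g * e y = inverse g" using eq[of x' y] x' by simp
  have "d x' \<noteq> 0" using e2 g0 by auto
  moreover have "d x' * g * e x = d x' * g * e y" using e2 e3 by simp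
  ultimately have "e x = e y" using g0 by simp
  hence "d x * e x = inverse (g^2)" using e1 g0 by (simp add: field_simps power2_eq_square)
  moreover have "d x * e x = inverse (W (\<alpha> x) (\<beta> x))" using eq[of x x] diag[of x] by simp
  ultimately have "W (\<alpha> x) (\<beta> x) = g^2" by (metis inverse_inverse_eq)
  thus ?thesis by blast
qed

lemma mm_diag_left:
  assumes "diagonal_m D" shows "mmult D M x y = D x x * M x y"
proof -
  have "mmult D M x y = (\<Sum>z\<in>UNIV. if z = x then D x x * M x y else 0)"
    unfolding mmult_def using assms unfolding diagonal_m_def by (intro sum.cong) auto
  thus ?thesis by simp
qed

lemma mm_diag_right:
  assumes "diagonal_m D" shows "mmult M D x y = M x y * D y y"
proof -
  have "mmult M D x y = (\<Sum>z\<in>UNIV. if z = y then M x y * D y y else 0)"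
    unfolding mmult_def using assms unfolding diagonal_m_def by (intro sum.cong) auto
  thus ?thesis by simp
qed

lemma mm_perm_left:
  "mmult (\<lambda>x y. if \<sigma> x = y then 1 else 0) M x y = M (\<sigma> x) y"
proof -
  have "mmult (\<lambda>x y. if \<sigma> x = y then 1 else 0) M x y = (\<Sum>z\<in>UNIV. if \<sigma> x = z then M z y else 0)"
    unfolding mmult_def by (intro sum.cong) auto
  thus ?thesis by simp
qed

lemma mm_perm_right:
  assumes "\<tau> permutes UNIV"
  shows "mmult M (\<lambda>x y. if \<tau> x = y then 1 else 0) x y = M x (inv \<tau> y)"
proof -
  have "mmult M (\<lambda>x y. if \<tau> x = y then 1 else 0) x y = (\<Sum>z\<in>UNIV. if inv \<tau> y = z then M x z else 0)"
    unfolding mmult_def using permutes_inv_eq[OF assms] by (intro sum.cong) auto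
  thus ?thesis by simp
qed

lemma unpack:
  assumes "typeII_equiv W1 W2"
  shows "\<exists>d e \<alpha> \<beta>. inj \<alpha> \<and> inj \<beta> \<and> (\<forall>x y. d x * W1 x y * e y = W2 (\<alpha> x) (\<beta> y))"
proof -
  obtain D D' T T' where h: "diagonal_m D" "diagonal_m D'" "permutation_m T" "permutation_m T'"
     "mmult (mmult D W1) D' = mmult (mmult T W2) T'"
    using assms unfolding typeII_equiv_def by blast
  obtain \<sigma> where s: "\<sigma> permutes UNIV" "T = (\<lambda>x y. if \<sigma> x = y then 1 else 0)"
    using h(3) unfolding permutation_m_def by blast
  obtain \<tau> where t: "\<tau> permutes UNIV" "T' = (\<lambda>x y. if \<tau> x = y then 1 else 0)"
    using h(4) unfolding permutation_m_def by blast
  have "\<forall>x y. D x x * W1 x y * D' y y = W2 (\<sigma> x) (inv \<tau> y)"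
  proof (intro allI)
    fix x y
    have "mmult (mmult D W1) D' x y = mmult (mmult T W2) T' x y" using h(5) by simp
    thus "D x x * W1 x y * D' y y = W2 (\<sigma> x) (inv \<tau> y)"
      using h(1,2) s t by (simp add: mm_diag_left mm_diag_right mm_perm_left mm_perm_right)
  qed
  moreover have "inj \<sigma>" "inj (inv \<tau>)"
    using s(1) t(1) permutes_inj permutes_inv by blast+
  ultimately show ?thesis
    by (intro exI[of _ "\<lambda>x. D x x"] exI[of _ "\<lambda>y. D' y y"] exI[of _ \<sigma>] exI[of _ "inv \<tau>"]) simp
qed
lemma quad_elim:
  fixes w k c d :: complex
  assumes "w^2 + k*w + 1 = 0" "c*w = d"
  shows "d^2 + k*c*d + c^2 = 0"
proof -
  have "(c*w)^2 + k*c*(c*w) + c^2 = c^2*(w^2+k*w+1)" by algebra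
  thus ?thesis using assms by simp
qed

lemma alg_b:
  fixes t :: nat and w :: complex
  assumes Q: "w^2 + ((of_nat t + 4)^2-3)*w + 1 = 0"
  shows "(-((of_nat t + 4)-3)*w + ((of_nat t + 4)-1))/((of_nat t + 4)^2-2*(of_nat t + 4)-1) \<noteq> 0 \<and>
         (-((of_nat t + 4)-3)*w + ((of_nat t + 4)-1))/((of_nat t + 4)^2-2*(of_nat t + 4)-1) \<noteq> 1 \<and>
         (-((of_nat t + 4)-3)*w + ((of_nat t + 4)-1))/((of_nat t + 4)^2-2*(of_nat t + 4)-1) \<noteq> -1 \<and>
         ((-((of_nat t + 4)-3)*w + ((of_nat t + 4)-1))/((of_nat t + 4)^2-2*(of_nat t + 4)-1))^2 \<noteq> w"
proof -
  define x :: complex where "x = of_nat t"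
  define r where "r = x + 4"
  define k where "k = r^2 - 3"
  define Dn where "Dn = r^2-2*r-1"
  define X where "X = -(r-3)*w + (r-1)"
  have Q': "w^2 + k*w + 1 = 0" using Q unfolding k_def r_def x_def .
  have Dn_eq: "Dn = of_nat (t^2+6*t+7)" unfolding Dn_def r_def x_def
    by (simp add: algebra_simps power2_eq_square)
  have Dn0: "Dn \<noteq> 0" unfolding Dn_eq of_nat_eq_0_iff by simp
  have c0: "r - 3 = x + 1" unfolding r_def by simp
  have 1: "X/Dn \<noteq> 0"
  proof
    assume "X/Dn = 0"
    hence "X = 0" using Dn0 by simp
    hence "(r-3)*w = r-1" unfolding X_def by (simp add: algebra_simps)
    from quad_elim[OF Q' this]
    have "(r-1)^2 + k*(r-3)*(r-1) + (r-3)^2 = 0" .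
    moreover have "(r-1)^2 + k*(r-3)*(r-1) + (r-3)^2
       = of_nat ((t+3)^2 + (t^2+8*t+13)*(t+1)*(t+3) + (t+1)^2)"
      unfolding k_def r_def x_def by (simp add: algebra_simps power2_eq_square)
    ultimately show False by (simp only: of_nat_eq_0_iff) simp
  qed
  have 2: "X/Dn \<noteq> 1"
  proof
    assume "X/Dn = 1"
    hence "X = Dn" using Dn0 by simp
    hence "(r-3)*w = r-1-Dn" unfolding X_def by (simp add: algebra_simps)
    from quad_elim[OF Q' this]
    have "(r-1-Dn)^2 + k*(r-3)*(r-1-Dn) + (r-3)^2 = 0" .
    moreover have "(r-1-Dn)^2 + k*(r-3)*(r-1-Dn) + (r-3)^2
       = - of_nat ((t+1)^2 * (t^3+11*t^2+37*t+35))"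
      unfolding k_def r_def x_def Dn_def by (simp add: algebra_simps power2_eq_square power3_eq_cube)
    ultimately show False by (simp only: neg_equal_0_iff_equal of_nat_eq_0_iff) simp
  qed
  have 3: "X/Dn \<noteq> -1"
  proof
    assume "X/Dn = -1"
    hence "X = -Dn" using Dn0 by (simp add: field_simps)
    hence "(r-3)*w = r-1+Dn" unfolding X_def by (simp add: algebra_simps)
    from quad_elim[OF Q' this]
    have "(r-1+Dn)^2 + k*(r-3)*(r-1+Dn) + (r-3)^2 = 0" .
    moreover have "(r-1+Dn)^2 + k*(r-3)*(r-1+Dn) + (r-3)^2
       = of_nat ((t^2+7*t+10)^2 + (t^2+8*t+13)*(t+1)*(t^2+7*t+10) + (t+1)^2)"
      unfolding k_def r_def x_def Dn_def by (simp add: algebra_simps power2_eq_square)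
    ultimately show False by (simp only: of_nat_eq_0_iff) simp
  qed
  have 4: "(X/Dn)^2 \<noteq> w"
  proof
    define a where "a = -((r-3)^2*k) - 2*(r-3)*(r-1) - Dn^2"
    define b where "b = (r-1)^2 - (r-3)^2"
    define N where "N = (11760 + 38192*t + 52908*t^2 + 40768*t^3 + 19084*t^4 + 5552*t^5 + 980*t^6 + 96*t^7 + 4*t^8)"
    assume "(X/Dn)^2 = w"
    hence XX: "X^2 = Dn^2 * w" using Dn0 by (simp add: field_simps power2_eq_square)
    have E: "a*w + b = (X^2 - Dn^2*w) - (r-3)^2*(w^2 + k*w + 1)"
      unfolding a_def b_def X_def by algebra
    have "a*w + b = 0" unfolding E XX Q' by simp
    hence "a*w = -b" by (simp add: eq_neg_iff_add_eq_0)
    from quad_elim[OF Q' this]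
    have "(-b)^2 + k*a*(-b) + a^2 = 0" .
    moreover have "(-b)^2 + k*a*(-b) + a^2 = of_nat N"
      unfolding N_def a_def b_def k_def r_def x_def Dn_def by (simp only: of_nat_add of_nat_mult of_nat_power of_nat_numeral) algebra
    ultimately have "(of_nat N::complex) = 0" by metis
    hence "N = 0" by (simp only: of_nat_eq_0_iff)
    thus False unfolding N_def by simp
  qed
  show ?thesis using 1 2 3 4 unfolding X_def Dn_def r_def x_def by simp
qed

lemma sum4_expand: "(\<Sum>i\<le>(3::nat). f i) = f 0 + f 1 + f 2 + f 3"
  by (simp add: numeral_3_eq_3 numeral_2_eq_2 add.assoc)

theorem proposition5p8:
  fixes q :: nat and A :: "nat \<Rightarrow> 'v::finite cmat" and w3 :: complex
  assumes "even q" and "q \<ge> 4"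
    and "card (UNIV :: 'v set) = q^2 - 1"
    and "sym_assoc_scheme 3 A"
    and "first_eigenmatrix 3 A (P58 q)"
    and "w3 + 1 / w3 + of_nat q ^ 2 - 3 = 0"
  shows "(let W = A 0 + smult_m w3 (A 1 + A 2 + A 3)
          in \<not> typeII_equiv W (entry_inv W))
       \<and> (let w1 = (- (of_nat q - 3) * w3 + (of_nat q - 1)) / (of_nat q ^ 2 - 2 * of_nat q - 1);
              W = A 0 + smult_m w1 (A 1) + smult_m w1 (A 2) + smult_m w3 (A 3)
          in \<not> typeII_equiv W (entry_inv W))"
proof -
  define t where "t = q - 4"
  have qt: "q = t + 4" using assms(2) unfolding t_def by simp
  have ofq: "(of_nat q :: complex) = of_nat t + 4" unfolding qt by simp
  have q2: "q^2 \<ge> 16" 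
  proof -
    have "4^2 \<le> q^2" using assms(2) by (rule power_mono) simp
    thus ?thesis by simp
  qed
  have w30: "w3 \<noteq> 0"
  proof
    assume "w3 = 0"
    hence "(of_nat (q^2) :: complex) = of_nat 3" using assms(6) by simp
    hence "q^2 = 3" by (simp only: of_nat_eq_iff)
    thus False using q2 by simp
  qed
  have Q: "w3^2 + ((of_nat t + 4)^2-3)*w3 + 1 = 0"
  proof -
    have "w3 * (w3 + 1 / w3 + of_nat q ^ 2 - 3) = 0" using assms(6) by simp
    thus ?thesis using w30 unfolding ofq by (simp add: algebra_simps power2_eq_square)
  qed
  have A0: "A 0 = idm" and ent: "\<And>i x y. i \<le> 3 \<Longrightarrow> A i x y = 0 \<or> A i x y = 1"
    and sym: "transp_m (A 3) = A 3" and sumJ: "(\<Sum>i\<le>3. A i) = Jm"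
    using assms(4) unfolding sym_assoc_scheme_def by auto
  have sum4: "A 0 x y + A 1 x y + A 2 x y + A 3 x y = 1" for x y
    using fun_cong[OF fun_cong[OF sumJ, of x], of y] unfolding sum4_expand by (simp add: Jm_def)
  have sym3: "A 3 x y = A 3 y x" for x y
    using fun_cong[OF fun_cong[OF sym, of y], of x] unfolding transp_m_def by simp
  have e1: "A 1 x y = 0 \<or> A 1 x y = 1" and e2: "A 2 x y = 0 \<or> A 2 x y = 1"
    and e3: "A 3 x y = 0 \<or> A 3 x y = 1" for x y using ent by auto
  have ncard: "card (UNIV :: 'v set) > 4" using assms(3) q2 by simp
  show ?thesis
  proof
    show "let W = A 0 + smult_m w3 (A 1 + A 2 + A 3) in \<not> typeII_equiv W (entry_inv W)"
    proof -
      define W where "W = A 0 + smult_m w3 (A 1 + A 2 + A 3)"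
      have Wa: "W x y = (if x = y then 1 else w3)" for x y
      proof -
        have "A 1 x y + A 2 x y + A 3 x y = 1 - idm x y" using sum4[of x y] unfolding A0
          by (simp add: algebra_simps)
        hence "W x y = idm x y + w3 * (1 - idm x y)" unfolding W_def A0 smult_m_def by simp
        thus ?thesis by (simp add: idm_def)
      qed
      have "\<not> typeII_equiv W (entry_inv W)"
      proof
        assume "typeII_equiv W (entry_inv W)"
        from unpack[OF this] obtain d e \<alpha> \<beta> where h0: "inj \<alpha>" "inj \<beta>"
          "\<forall>x y. d x * W x y * e y = entry_inv W (\<alpha> x) (\<beta> y)"
          by blast
        have h3: "d x * W x y * e y = inverse (W (\<alpha> x) (\<beta> y))" for x y
        proof -
          have "d x * W x y * e y = entry_inv W (\<alpha> x) (\<beta> y)" by (rule h0(3)[rule_format])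
          thus ?thesis unfolding entry_inv_def .
        qed
        note h = h0(1) h0(2) h3
        have rb: "card {y. W x y \<noteq> w3} \<le> 1" for x
        proof -
          have "{y. W x y \<noteq> w3} \<subseteq> {x}" using Wa by auto
          thus ?thesis using card_mono[of "{x}" "{y. W x y \<noteq> w3}"] by simp
        qed
        have cb: "card {x. W x y \<noteq> w3} \<le> 1" for y
        proof -
          have "{x. W x y \<noteq> w3} \<subseteq> {y}" using Wa by auto
          thus ?thesis using card_mono[of "{y}" "{x. W x y \<noteq> w3}"] by simp
        qed
        obtain u v where "W u v = w3^2"
        proof -
          have big: "4*1 < card (UNIV::'v set)" using ncard by simp
          have dg: "\<And>x. W x x = 1" using Wa by simp
          show ?thesis using key[OF rb cb big dg w30 h] that by blast
        qed
        hence "w3^2 = 1 \<or> w3^2 = w3" using Wa by (auto split: if_splits)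
        hence "w3 = 1 \<or> w3 = -1"
        proof (elim disjE)
          assume "w3^2 = 1" thus ?thesis by (simp add: power2_eq_1_iff)
        next
          assume "w3^2 = w3" hence "w3*w3 = w3*1" by (simp add: power2_eq_square)
          hence "w3 = 1" using w30 by (metis mult_left_cancel)
          thus ?thesis by simp
        qed
        thus False
        proof
          assume "w3 = 1"
          hence "(of_nat (q^2) :: complex) = of_nat 1" using assms(6) by (simp add: algebra_simps)
          hence "q^2 = 1" by (simp only: of_nat_eq_iff)
          thus False using q2 by simp
        next
          assume "w3 = -1"
          hence "(of_nat (q^2) :: complex) = of_nat 5" using assms(6) by (simp add: algebra_simps)
          hence "q^2 = 5" by (simp only: of_nat_eq_iff)
          thus False using q2 by simp
        qed
      qed
      thus ?thesis unfolding W_def Let_def .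
    qed
  next
    show "let w1 = (- (of_nat q - 3) * w3 + (of_nat q - 1)) / (of_nat q ^ 2 - 2 * of_nat q - 1);
              W = A 0 + smult_m w1 (A 1) + smult_m w1 (A 2) + smult_m w3 (A 3)
          in \<not> typeII_equiv W (entry_inv W)"
    proof -
      define w1 where "w1 = (- (of_nat q - 3) * w3 + (of_nat q - 1)) / (of_nat q ^ 2 - 2 * of_nat q - 1)"
      define W where "W = A 0 + smult_m w1 (A 1) + smult_m w1 (A 2) + smult_m w3 (A 3)"
      have alg: "w1 \<noteq> 0 \<and> w1 \<noteq> 1 \<and> w1 \<noteq> -1 \<and> w1^2 \<noteq> w3"
        using alg_b[OF Q] unfolding w1_def ofq .
      have Wb: "W x y = (if x = y then 1 else if A 3 x y = 1 then w3 else w1)" for x y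
      proof -
        have s: "A 0 x y + A 1 x y + A 2 x y + A 3 x y = 1" by (rule sum4)
        have W: "W x y = idm x y + w1 * A 1 x y + w1 * A 2 x y + w3 * A 3 x y"
          unfolding W_def A0 smult_m_def by simp
        show ?thesis
          using s e1[of x y] e2[of x y] e3[of x y] unfolding W A0 idm_def
          by (auto simp: algebra_simps)
      qed
      obtain E where E0: "E 0 = smult_m (1 / of_nat (card (UNIV :: 'v set))) Jm"
        and orth: "\<forall>i\<le>3. \<forall>j\<le>3. mmult (E i) (E j) = (if i = j then E i else 0)"
        and sumA: "\<forall>j\<le>3. A j = (\<Sum>i\<le>3. smult_m (P58 q i j) (E i))"
        using assms(5) unfolding first_eigenmatrix_def by blast
      define n where "n = card (UNIV :: 'v set)"
      have n0: "(of_nat n :: complex) \<noteq> 0" using ncard unfolding n_def by simp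
      have val: "card {z. A 3 x z = 1} = q - 2" for x
      proof -
        fix y
        have A3e: "A 3 x z = (\<Sum>i\<le>3. P58 q i 3 * E i x z)" for z
        proof -
          have "A 3 = (\<Sum>i\<le>3. smult_m (P58 q i 3) (E i))" using sumA by simp
          hence "A 3 x z = (\<Sum>i\<le>3. smult_m (P58 q i 3) (E i)) x z" by simp
          thus ?thesis unfolding sum_fun_app smult_m_def .
        qed
        have "mmult (A 3) (E 0) x y = (\<Sum>z\<in>UNIV. \<Sum>i\<le>3. P58 q i 3 * (E i x z * E 0 z y))"
          unfolding mmult_def A3e by (simp add: sum_distrib_right mult.assoc)
        also have "\<dots> = (\<Sum>i\<le>3. P58 q i 3 * mmult (E i) (E 0) x y)"
          unfolding mmult_def by (subst sum.swap) (simp add: sum_distrib_left)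
        also have "\<dots> = P58 q 0 3 * E 0 x y"
          using orth unfolding sum4_expand by simp
        finally have "mmult (A 3) (E 0) x y = P58 q 0 3 * E 0 x y" .
        moreover have "mmult (A 3) (E 0) x y = (\<Sum>z\<in>UNIV. A 3 x z) * (1 / of_nat n)"
          unfolding mmult_def E0 smult_m_def Jm_def n_def by (simp add: sum_divide_distrib)
        moreover have "P58 q 0 3 = of_nat q - 2" unfolding P58_def Let_def by simp
        moreover have "E 0 x y = 1 / of_nat n" unfolding E0 smult_m_def Jm_def n_def by simp
        ultimately have S: "(\<Sum>z\<in>UNIV. A 3 x z) = of_nat q - 2" using n0 by simp
        have "(\<Sum>z\<in>UNIV. A 3 x z) = (\<Sum>z\<in>UNIV. if A 3 x z = 1 then 1 else 0)"
          by (rule sum.cong) (use e3 in auto)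
        also have "\<dots> = of_nat (card {z. A 3 x z = 1})"
          by (simp add: sum.If_cases)
        finally have "(of_nat (card {z. A 3 x z = 1}) :: complex) = of_nat (q - 2)"
          using S assms(2) by (simp add: of_nat_diff)
        thus ?thesis by (simp only: of_nat_eq_iff)
      qed
      have "\<not> typeII_equiv W (entry_inv W)"
      proof
        assume "typeII_equiv W (entry_inv W)"
        from unpack[OF this] obtain d e \<alpha> \<beta> where h0: "inj \<alpha>" "inj \<beta>"
          "\<forall>x y. d x * W x y * e y = entry_inv W (\<alpha> x) (\<beta> y)"
          by blast
        have h3: "d x * W x y * e y = inverse (W (\<alpha> x) (\<beta> y))" for x y
        proof -
          have "d x * W x y * e y = entry_inv W (\<alpha> x) (\<beta> y)" by (rule h0(3)[rule_format])
          thus ?thesis unfolding entry_inv_def .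
        qed
        note h = h0(1) h0(2) h3
        have rb: "card {y. W x y \<noteq> w1} \<le> q - 1" for x
        proof -
          have "{y. W x y \<noteq> w1} \<subseteq> insert x {y. A 3 x y = 1}" using Wb by auto
          hence "card {y. W x y \<noteq> w1} \<le> card (insert x {y. A 3 x y = 1})"
            by (rule card_mono[rotated]) simp
          also have "\<dots> \<le> Suc (card {y. A 3 x y = 1})" by (simp add: card_insert_le_m1 card_insert_if)
          finally show ?thesis using val[of x] assms(2) by simp
        qed
        have cb: "card {x. W x y \<noteq> w1} \<le> q - 1" for y
        proof -
          have "{x. W x y \<noteq> w1} \<subseteq> insert y {x. A 3 y x = 1}" using Wb sym3 by auto
          hence "card {x. W x y \<noteq> w1} \<le> card (insert y {x. A 3 y x = 1})"
            by (rule card_mono[rotated]) simp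
          also have "\<dots> \<le> Suc (card {x. A 3 y x = 1})" by (simp add: card_insert_if)
          finally show ?thesis using val[of y] assms(2) by simp
        qed
        have big: "4*(q-1) < card (UNIV::'v set)"
        proof -
          have "4*q \<le> q*q" using assms(2) by (simp add: mult_le_mono1)
          hence "4*(q-1) + 1 < q^2" using assms(2) unfolding power2_eq_square by linarith
          thus ?thesis using assms(3) by simp
        qed
        have dg: "\<And>x. W x x = 1" using Wb by simp
        have g0: "w1 \<noteq> 0" using alg by simp
        obtain u v where "W u v = w1^2"
          using key[OF rb cb big dg g0 h] by blast
        hence "w1^2 = 1 \<or> w1^2 = w3 \<or> w1^2 = w1" using Wb by (auto split: if_splits)
        moreover have "w1^2 \<noteq> 1" using alg by (auto simp: power2_eq_1_iff)
        moreover have "w1^2 \<noteq> w1"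
        proof
          assume "w1^2 = w1" hence "w1*w1 = w1*1" by (simp add: power2_eq_square)
          hence "w1 = 1" using g0 by (metis mult_left_cancel)
          thus False using alg by simp
        qed
        ultimately show False using alg by blast
      qed
      thus ?thesis unfolding W_def w1_def Let_def .
    qed
  qed
qed

end
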